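(* Let $F$ be an unsatisfiable formula and $\mathcal{P}$ a subproblem for $F$ admitting a compatible proof. Then every compatible proof $(L^0,\dots,L^n)$ of $\mathcal{P}$ contains at least $$\min\{\#S - 1 \mid S \subseteq \mathrm{Frontier}[\mathrm{Known}(\mathcal{P})],\ S \text{ is unsatisfiable}\}$$ clauses in $L^0 \cup \cdots \cup L^n$ that do not belong to $\mathrm{Known}(\mathcal{P})$.
   Context: Clauses are finite sets of literals without complementary pairs; $\bot$ is the empty clause; a formula (set of clauses) is unsatisfiable if no truth assignment satisfies all its clauses. Resolution: for $A = C' \cup \{x\}$, $B = C'' \cup \{\bar{x}\}$ with $C' \cup C''$ containing no complementary pair, $A \diamond B := C' \cup C''$. The frontier of a set of clauses $G$ is $\mathrm{Frontier}[G] := \{\omega \in G \mid \text{there is no } \omega' \in G \text{ with } \omega' \subsetneq \omega\}$. Layer list on an unsatisfiable formula $F$: a sequence $(L^0,\dots,L^n)$, $n\ge 1$, of sets of clauses with $L^j\neq\emptyset$ for $j \ge 1$, such that (1) $L^0 = F$; (2) $\bot \in L^k$ for some $1 \le k \le n$; (3) for all $1\le j\le n$, every $\omega \in L^j$ equals $\omega'\diamond\omega''$ for some $\omega' \in L^{j-1}$, $\omega'' \in L^0\cup\cdots\cup L^{j-1}$; (4) for all $1 \le k < j \le n$, no $\omega \in L^j$ equals $\omega'\diamond\omega''$ with $\omega' \in L^{k-1}$, $\omega'' \in L^0\cup\cdots\cup L^{k-1}$. A subproblem for $F$ is a tuple $\mathcal{P} = (\mathrm{Prev}, \mathrm{Cur},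 \mathrm{Next}, \mathrm{Forg})$ of four sets of clauses; $\mathrm{Known}(\mathcal{P}) = \mathrm{Prev} \cup \mathrm{Cur} \cup \mathrm{Next}$. A compatible proof of $\mathcal{P}$ is a layer list $(L^0,\dots,L^n)$ on $F$ such that for some index $k < n$: $L^k = \mathrm{Cur}$, $L^0 \cup \cdots \cup L^{k-1} = \mathrm{Prev}$, $L^{k+1} \supseteq \mathrm{Next}$, and no clause of $\mathrm{Forg}$ occurs in any layer. *)

theory Defs
  imports Main
begin

datatype 'v lit = Pos 'v | Neg 'v

fun compl :: "'v lit \<Rightarrow> 'v lit" where
  "compl (Pos v) = Neg v"
| "compl (Neg v) = Pos v"

type_synonym 'v clause = "'v lit set"

definition no_compl_pair :: "'v clause \<Rightarrow> bool" where
  "no_compl_pair C \<longleftrightarrow> (\<forall>l\<in>C. compl l \<notin> C)"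

definition is_clause :: "'v clause \<Rightarrow> bool" where
  "is_clause C \<longleftrightarrow> finite C \<and> no_compl_pair C"

definition is_formula :: "'v clause set \<Rightarrow> bool" where
  "is_formula F \<longleftrightarrow> finite F \<and> (\<forall>C\<in>F. is_clause C)"

fun lit_true :: "('v \<Rightarrow> bool) \<Rightarrow> 'v lit \<Rightarrow> bool" where
  "lit_true a (Pos v) = a v"
| "lit_true a (Neg v) = (\<not> a v)"

definition satisfiable :: "'v clause set \<Rightarrow> bool" where
  "satisfiable F \<longleftrightarrow> (\<exists>a. \<forall>C\<in>F. \<exists>l\<in>C. lit_true a l)"

definition unsatisfiable :: "'v clause set \<Rightarrow> bool" where
  "unsatisfiable F \<longleftrightarrow> \<not> satisfiable F"

definition is_resolvent :: "'v clause \<Rightarrow> 'v clause \<Rightarrow> 'v clause \<Rightarrow> bool" where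
  "is_resolvent w A B \<longleftrightarrow> (\<exists>x. x \<in> A \<and> compl x \<in> B \<and>
      no_compl_pair ((A - {x}) \<union> (B - {compl x})) \<and>
      w = (A - {x}) \<union> (B - {compl x}))"

definition frontier :: "'v clause set \<Rightarrow> 'v clause set" where
  "frontier G = {w \<in> G. \<not> (\<exists>w'\<in>G. w' \<subset> w)}"

definition layer_list :: "'v clause set \<Rightarrow> (nat \<Rightarrow> 'v clause set) \<Rightarrow> nat \<Rightarrow> bool" where
  "layer_list F L n \<longleftrightarrow>
     n \<ge> 1 \<and>
     (\<forall>j. 1 \<le> j \<and> j \<le> n \<longrightarrow> L j \<noteq> {}) \<and>
     L 0 = F \<and>
     (\<exists>k. 1 \<le> k \<and> k \<le> n \<and> {} \<in> L k) \<and>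
     (\<forall>j. 1 \<le> j \<and> j \<le> n \<longrightarrow>
        (\<forall>w\<in>L j. \<exists>w'\<in>L (j - 1). \<exists>w''\<in>(\<Union>i<j. L i). is_resolvent w w' w'')) \<and>
     (\<forall>k j. 1 \<le> k \<and> k < j \<and> j \<le> n \<longrightarrow>
        \<not> (\<exists>w\<in>L j. \<exists>w'\<in>L (k - 1). \<exists>w''\<in>(\<Union>i<k. L i). is_resolvent w w' w''))"

definition Known :: "'v clause set \<Rightarrow> 'v clause set \<Rightarrow> 'v clause set \<Rightarrow> 'v clause set" where
  "Known Prev Cur Next = Prev \<union> Cur \<union> Next"

definition compatible_proof ::
  "'v clause set \<Rightarrow> 'v clause set \<Rightarrow> 'v clause set \<Rightarrow> 'v clause set \<Rightarrow> 'v clause set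
   \<Rightarrow> (nat \<Rightarrow> 'v clause set) \<Rightarrow> nat \<Rightarrow> bool" where
  "compatible_proof F Prev Cur Next Forg L n \<longleftrightarrow>
     layer_list F L n \<and>
     (\<exists>k<n. L k = Cur \<and> (\<Union>i<k. L i) = Prev \<and> Next \<subseteq> L (k + 1) \<and>
            (\<forall>j\<le>n. L j \<inter> Forg = {}))"

end

theory Submission
  imports Defs
begin

lemma lit_true_compl: "lit_true a (compl l) = (\<not> lit_true a l)"
  by (cases l) auto

lemma resolvent_sound:
  assumes "is_resolvent d A B" "\<exists>l\<in>A. lit_true a l" "\<exists>l\<in>B. lit_true a l"
  shows "\<exists>l\<in>d. lit_true a l"
proof -
  obtain x where x: "x \<in> A" "compl x \<in> B" "d = (A - {x}) \<union> (B - {compl x})"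
    using assms(1) unfolding is_resolvent_def by blast
  show ?thesis
  proof (cases "lit_true a x")
    case True
    then have "\<not> lit_true a (compl x)" by (simp add: lit_true_compl)
    then obtain l where "l \<in> B" "lit_true a l" "l \<noteq> compl x" using assms(3) by blast
    then show ?thesis using x by blast
  next
    case False
    then obtain l where "l \<in> A" "lit_true a l" "l \<noteq> x" using assms(2) by blast
    then show ?thesis using x by blast
  qed
qed

lemma resolvent_subset: "is_resolvent d A B \<Longrightarrow> d \<subseteq> A \<union> B"
  unfolding is_resolvent_def by blast

lemma count_lemma:
  fixes K :: "'v clause set" and \<rho> :: "'v clause \<Rightarrow> nat"
  shows "finite D \<Longrightarrow> finite C \<Longrightarrow> C \<subseteq> K \<union> D \<Longrightarrow>
    (\<forall>d\<in>D. \<exists>A\<in>K\<union>D. \<exists>B\<in>K\<union>D. \<rho> A < \<rho> d \<and> \<rho> B < \<rho> d \<and> is_resolvent d A B) \<Longrightarrow>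
    \<exists>S\<subseteq>K. finite S \<and> card S \<le> card D + card C \<and>
      (\<forall>a. (\<forall>s\<in>S. \<exists>l\<in>s. lit_true a l) \<longrightarrow> (\<forall>c\<in>C. \<exists>l\<in>c. lit_true a l))"
proof (induction "card D" arbitrary: D C)
  case 0
  then have "D = {}" by simp
  then show ?case using 0 by (rule_tac x=C in exI) auto
next
  case (Suc m)
  then have "D \<noteq> {}" by auto
  have "Max (\<rho> ` D) \<in> \<rho> ` D" using Suc \<open>D \<noteq> {}\<close> by simp
  then obtain d where dD: "d \<in> D" and dm: "\<rho> d = Max (\<rho> ` D)" by auto
  have dmax: "\<rho> d' \<le> \<rho> d" if "d' \<in> D" for d'
    unfolding dm using Suc(3) that by simp
  define D' where "D' = D - {d}"
  have cardD': "m = card D'" using Suc dD unfolding D'_def by simp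
  have finD': "finite D'" using Suc unfolding D'_def by simp
  have hypD': "\<forall>d'\<in>D'. \<exists>A\<in>K\<union>D'. \<exists>B\<in>K\<union>D'. \<rho> A < \<rho> d' \<and> \<rho> B < \<rho> d' \<and> is_resolvent d' A B"
  proof
    fix d' assume "d' \<in> D'"
    then have "d' \<in> D" "\<rho> d' \<le> \<rho> d" using dmax unfolding D'_def by auto
    then obtain A B where "A\<in>K\<union>D" "B\<in>K\<union>D" "\<rho> A < \<rho> d'" "\<rho> B < \<rho> d'" "is_resolvent d' A B"
      using Suc(6) by blast
    moreover have "A \<noteq> d" "B \<noteq> d" using calculation \<open>\<rho> d' \<le> \<rho> d\<close> by auto
    ultimately show "\<exists>A\<in>K\<union>D'. \<exists>B\<in>K\<union>D'. \<rho> A < \<rho> d' \<and> \<rho> B < \<rho> d' \<and> is_resolvent d' A B"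
      unfolding D'_def by blast
  qed
  obtain A B where AB: "A\<in>K\<union>D" "B\<in>K\<union>D" "\<rho> A < \<rho> d" "\<rho> B < \<rho> d" "is_resolvent d A B"
    using Suc(6) dD by blast
  show ?case
  proof (cases "d \<in> C")
    case True
    define C' where "C' = (C - {d}) \<union> {A, B}"
    have "A \<noteq> d" "B \<noteq> d" using AB by auto
    then have c1: "C' \<subseteq> K \<union> D'" using AB Suc(5) unfolding C'_def D'_def by auto
    have c2: "finite C'" using Suc(4) unfolding C'_def by simp
    note IH = Suc(1)[OF cardD' finD' c2 c1 hypD']
    from IH obtain S where S: "S \<subseteq> K" "finite S" "card S \<le> card D' + card C'"
      "\<forall>a. (\<forall>s\<in>S. \<exists>l\<in>s. lit_true a l) \<longrightarrow> (\<forall>c\<in>C'. \<exists>l\<in>c. lit_true a l)"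
      by blast
    have "card C' \<le> card (C - {d}) + card {A, B}" unfolding C'_def by (rule card_Un_le)
    also have "\<dots> \<le> card (C - {d}) + 2" by (simp add: card_insert_le_m1)
    also have "\<dots> = card C + 1" using True Suc(4) card_Diff1_less[OF Suc(4) True] by simp
    finally have "card S \<le> card D + card C" using S(3) cardD' Suc(2) by simp
    moreover have "\<forall>a. (\<forall>s\<in>S. \<exists>l\<in>s. lit_true a l) \<longrightarrow> (\<forall>c\<in>C. \<exists>l\<in>c. lit_true a l)"
    proof (intro allI impI ballI)
      fix a c assume h: "\<forall>s\<in>S. \<exists>l\<in>s. lit_true a l" and c: "c \<in> C"
      have h': "\<forall>c\<in>C'. \<exists>l\<in>c. lit_true a l" using S(4) h by blast
      show "\<exists>l\<in>c. lit_true a l"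
      proof (cases "c = d")
        case True
        then show ?thesis using resolvent_sound[OF AB(5)] h' unfolding C'_def by auto
      next
        case False
        then show ?thesis using h' c unfolding C'_def by auto
      qed
    qed
    ultimately show ?thesis using S by blast
  next
    case False
    then have c1: "C \<subseteq> K \<union> D'" using Suc(5) unfolding D'_def by auto
    note IH = Suc(1)[OF cardD' finD' Suc(4) c1 hypD']
    from IH obtain S where S: "S \<subseteq> K" "finite S" "card S \<le> card D' + card C"
      "\<forall>a. (\<forall>s\<in>S. \<exists>l\<in>s. lit_true a l) \<longrightarrow> (\<forall>c\<in>C. \<exists>l\<in>c. lit_true a l)"
      by blast
    then show ?thesis using cardD' Suc(2) by (rule_tac x=S in exI) auto
  qed
qed

lemma frontier_below:
  assumes "finite K" "\<forall>w\<in>K. finite w"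
  shows "s \<in> K \<Longrightarrow> \<exists>w\<in>frontier K. w \<subseteq> s"
proof (induction "card s" arbitrary: s rule: less_induct)
  case less
  show ?case
  proof (cases "s \<in> frontier K")
    case True then show ?thesis by blast
  next
    case False
    then obtain w' where "w' \<in> K" "w' \<subset> s" using less.prems unfolding frontier_def by blast
    moreover have "card w' < card s" using calculation assms(2) less.prems by (meson psubset_card_mono)
    ultimately show ?thesis using less.hyps by (meson order.trans psubset_imp_subset)
  qed
qed

theorem lemma2:
  fixes F Prev Cur Next Forg :: "'v clause set"
    and L :: "nat \<Rightarrow> 'v clause set" and n :: nat
  assumes "is_formula F"
    and "unsatisfiable F"
    and "\<exists>L' n'. compatible_proof F Prev Cur Next Forg L' n'"
    and "compatible_proof F Prev Cur Next Forg L n"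
  shows "card ((\<Union>j\<le>n. L j) - Known Prev Cur Next) \<ge>
         Min {card S - 1 | S. S \<subseteq> frontier (Known Prev Cur Next) \<and> unsatisfiable S}"
proof -
  define U where "U = (\<Union>j\<le>n. L j)"
  define K where "K = Known Prev Cur Next"
  have LL: "layer_list F L n" using assms(4) unfolding compatible_proof_def by blast
  obtain k where k: "k < n" "L k = Cur" "(\<Union>i<k. L i) = Prev" "Next \<subseteq> L (k + 1)"
    using assms(4) unfolding compatible_proof_def by blast
  have L0: "L 0 = F" using LL unfolding layer_list_def by blast
  have res: "\<And>j w. 1 \<le> j \<Longrightarrow> j \<le> n \<Longrightarrow> w \<in> L j \<Longrightarrow>
      \<exists>w'\<in>L (j - 1). \<exists>w''\<in>(\<Union>i<j. L i). is_resolvent w w' w''"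
    using LL unfolding layer_list_def by blast
  obtain kb where kb: "kb \<le> n" "{} \<in> L kb" using LL unfolding layer_list_def by blast
  define V where "V = \<Union>F"
  have finV: "finite V" using assms(1) unfolding V_def is_formula_def is_clause_def by blast
  have subV: "\<forall>w\<in>L j. w \<subseteq> V" if "j \<le> n" for j
    using that
  proof (induction j rule: less_induct)
    case (less j)
    show ?case
    proof (cases "j = 0")
      case True then show ?thesis using L0 unfolding V_def by auto
    next
      case False
      show ?thesis
      proof
        fix w assume "w \<in> L j"
        then obtain w' w'' i where "w' \<in> L (j-1)" "i < j" "w'' \<in> L i" "is_resolvent w w' w''"
          using res[of j w] False less.prems by auto
        moreover have "w' \<subseteq> V" using less.IH calculation False less.prems
          by (metis diff_less le_trans less_imp_le_nat less_one not_gr_zero)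
        moreover have "w'' \<subseteq> V" using less.IH calculation False less.prems by auto
        ultimately show "w \<subseteq> V" using resolvent_subset by blast
      qed
    qed
  qed
  have UV: "U \<subseteq> Pow V" using subV unfolding U_def by blast
  have finU: "finite U" using UV finV finite_subset by blast
  have finw: "\<forall>w\<in>U. finite w" using UV finV finite_subset by blast
  have KU: "K \<subseteq> U"
  proof -
    have "Prev \<subseteq> U"
    proof
      fix x assume "x \<in> Prev"
      then obtain i where "i < k" "x \<in> L i" using k(3) by blast
      then show "x \<in> U" using k(1) unfolding U_def by (intro UN_I[of i]) auto
    qed
    moreover have "Cur \<subseteq> U" using k unfolding U_def by (intro subsetI UN_I[of k]) auto
    moreover have "L (k+1) \<subseteq> U" using k unfolding U_def by (intro subsetI UN_I[of "k+1"]) auto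
    ultimately show ?thesis using k unfolding K_def Known_def by auto
  qed
  have FK: "F \<subseteq> K"
  proof (cases "k = 0")
    case True then show ?thesis using k L0 unfolding K_def Known_def by auto
  next
    case False then show ?thesis using k L0 unfolding K_def Known_def by auto
  qed
  define \<rho> where "\<rho> w = (LEAST j. w \<in> L j)" for w
  define D where "D = U - K"
  have KD: "K \<union> D = U" using KU unfolding D_def by blast
  have hypD: "\<forall>d\<in>D. \<exists>A\<in>K\<union>D. \<exists>B\<in>K\<union>D. \<rho> A < \<rho> d \<and> \<rho> B < \<rho> d \<and> is_resolvent d A B"
  proof
    fix d assume "d \<in> D"
    then obtain j0 where j0: "j0 \<le> n" "d \<in> L j0" "d \<notin> K" unfolding D_def U_def by blast
    define j where "j = \<rho> d"
    have dj: "d \<in> L j" unfolding j_def \<rho>_def using j0 by (metis LeastI)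
    have jle: "j \<le> j0" unfolding j_def \<rho>_def using j0 by (metis Least_le)
    have "j \<noteq> 0"
    proof
      assume "j = 0" then have "d \<in> F" using dj L0 by simp
      then show False using j0(3) FK by blast
    qed
    then obtain A B i where AB: "A \<in> L (j-1)" "i < j" "B \<in> L i" "is_resolvent d A B"
      using res[of j d] dj jle j0 by auto
    have "\<rho> A \<le> j - 1" unfolding \<rho>_def using AB by (metis Least_le)
    moreover have "\<rho> B \<le> i" unfolding \<rho>_def using AB by (metis Least_le)
    moreover have "A \<in> U" "B \<in> U" unfolding U_def using AB jle j0 by auto
    ultimately show "\<exists>A\<in>K\<union>D. \<exists>B\<in>K\<union>D. \<rho> A < \<rho> d \<and> \<rho> B < \<rho> d \<and> is_resolvent d A B"
      using KD AB \<open>j \<noteq> 0\<close> unfolding j_def by (metis diff_less le_less_trans less_one not_less order.strict_trans1 zero_less_iff_neq_zero)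
  qed
  have "{} \<in> K \<union> D" using KD kb unfolding U_def by blast
  then obtain S where S: "S \<subseteq> K" "finite S" "card S \<le> card D + 1"
      "\<forall>a. (\<forall>s\<in>S. \<exists>l\<in>s. lit_true a l) \<longrightarrow> (\<forall>c\<in>{{}}. \<exists>l\<in>c. lit_true a l)"
    using count_lemma[of D "{{}}" K \<rho>] finU hypD unfolding D_def by auto
  have finK: "finite K" using KU finU finite_subset by blast
  have finwK: "\<forall>w\<in>K. finite w" using KU finw by blast
  have "\<forall>s\<in>S. \<exists>w. w \<in> frontier K \<and> w \<subseteq> s"
    using frontier_below[OF finK finwK] S(1) by blast
  then obtain f where f: "\<And>s. s \<in> S \<Longrightarrow> f s \<in> frontier K \<and> f s \<subseteq> s" by metis
  define S' where "S' = f ` S"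
  have S'1: "S' \<subseteq> frontier K" using f unfolding S'_def by blast
  have S'2: "unsatisfiable S'"
    unfolding unsatisfiable_def satisfiable_def
  proof
    assume "\<exists>a. \<forall>C\<in>S'. \<exists>l\<in>C. lit_true a l"
    then obtain a where "\<forall>C\<in>S'. \<exists>l\<in>C. lit_true a l" by blast
    then have "\<forall>s\<in>S. \<exists>l\<in>s. lit_true a l" using f unfolding S'_def by fastforce
    then show False using S(4) by blast
  qed
  have cS': "card S' \<le> card S" unfolding S'_def using S(2) card_image_le by blast
  have finfr: "finite (frontier K)" using finK unfolding frontier_def by simp
  have "finite {card S - 1 | S. S \<subseteq> frontier K \<and> unsatisfiable S}"
  proof -
    have "{card S - 1 | S. S \<subseteq> frontier K \<and> unsatisfiable S} \<subseteq> (\<lambda>S. card S - 1) ` Pow (frontier K)"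
      by blast
    then show ?thesis using finfr finite_subset by blast
  qed
  moreover have "card S' - 1 \<in> {card S - 1 | S. S \<subseteq> frontier K \<and> unsatisfiable S}"
    using S'1 S'2 by blast
  ultimately have "Min {card S - 1 | S. S \<subseteq> frontier K \<and> unsatisfiable S} \<le> card S' - 1"
    by (rule Min_le)
  also have "\<dots> \<le> card D" using cS' S(3) by simp
  finally show ?thesis unfolding D_def U_def K_def .
qed

end
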